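(* Let $q$ be a power of an odd prime, $q\ge m+1$, $\ell=2^m$ with $m\ge 2$, and let $\{\mathcal{X}_i=(X_i,X'_i)\}_{i=0}^{m-1}$ be the matchings defined in the context. Let $\lambda_0,\dots,\lambda_{m-1}\in\mathbb{F}_q^*$ be pairwise distinct with $\lambda_{2t}=-\lambda_{2t+1}$ for every $t\in\{0,\dots,\lfloor m/2\rfloor-1\}$. Then for every $i\ne j$, the pairs $(\mathcal{X}_i,\lambda_i)$ and $(\mathcal{X}_j,\lambda_j)$ satisfy conditions (B1)–(B3) (with $(\mathcal{X},\lambda_x)=(\mathcal{X}_i,\lambda_i)$, $(\mathcal{Y},\lambda_y)=(\mathcal{X}_j,\lambda_j)$).
   Context: Identify $e_i\in\mathbb{F}_q^{2^m}$ with the length-$m$ binary string of $i$, entries indexed $0,\dots,m-1$ (entry $0$ most significant). The boolean cube $C(\{(i_j,b_j)\}_{j=1}^k)$ is the lexicographically ordered sequence of binary strings having bit $b_j$ in entry $i_j$ for all $j$; $\circ$ is concatenation. For $t\in\{0,\dots,\lfloor m/2\rfloor-1\}$: $X_{2t}=C(\{(2t,0),(2t+1,0)\})\circ C(\{(2t,0),(2t+1,1)\})$, $X'_{2t}=C(\{(2t,1),(2t+1,0)\})\circ C(\{(2t,1),(2t+1,1)\})$, $X_{2t+1}=C(\{(2t,0),(2t+1,0)\})\circ C(\{(2t,1),(2t+1,0)\})$, $X'_{2t+1}=C(\{(2t,0),(2t+1,1)\})\circ C(\{(2t,1),(2t+1,1)\})$; if $m$ odd, $X_{m-1}=C(\{(m-1,0)\})$,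 $X'_{m-1}=C(\{(m-1,1)\})$. Writing $\mathcal{X}=(X,X')$, $X=(x_0,\dots,x_{\ell/2-1})$, $X'=(x'_0,\dots)$ and similarly $\mathcal{Y}=(Y,Y')$, the conditions are: (B1) $\lambda_x\ne\lambda_y$; (B2) every edge $\{x_s,x'_s\}$ of $\mathcal{X}$ lies in $Y$ or in $Y'$ and every edge $\{y_s,y'_s\}$ of $\mathcal{Y}$ lies in $X$ or in $X'$ (pairing condition); (B3) if $\lambda_x=-\lambda_y$ then for all $i$: if $(x_i,x'_i)=(y_j,y_t)$ then $i\le\ell/4-1$, $j\le\ell/4-1$, $t>\ell/4-1$; and if $(x_i,x'_i)=(y'_j,y'_t)$ then $i>\ell/4-1$, $j\le\ell/4-1$, $t>\ell/4-1$. *)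

theory Defs
  imports "HOL-Computational_Algebra.Primes" "HOL-Library.Cardinality"
begin

text \<open>Vertex e_i is identified with i in {0..<2^m}; entry k (k < m, entry 0 most
significant) of the length-m binary string of i.\<close>
definition bit_entry :: "nat \<Rightarrow> nat \<Rightarrow> nat \<Rightarrow> nat" where
  "bit_entry m k x = (x div 2 ^ (m - 1 - k)) mod 2"

text \<open>Boolean cube C({(i_j,b_j)}): lexicographically (= numerically) ordered list of
length-m strings with bit b_j in entry i_j.\<close>
definition cube :: "nat \<Rightarrow> (nat \<times> nat) list \<Rightarrow> nat list" where
  "cube m cs = filter (\<lambda>x. \<forall>(k, b) \<in> set cs. bit_entry m k x = b) [0..<2 ^ m]"

definition matching :: "nat \<Rightarrow> nat \<Rightarrow> nat list \<times> nat list" where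
  "matching m i =
    (if i < 2 * (m div 2) then
       (if even i then
          (cube m [(i,0),(i+1,0)] @ cube m [(i,0),(i+1,1)],
           cube m [(i,1),(i+1,0)] @ cube m [(i,1),(i+1,1)])
        else
          (cube m [(i-1,0),(i,0)] @ cube m [(i-1,1),(i,0)],
           cube m [(i-1,0),(i,1)] @ cube m [(i-1,1),(i,1)]))
     else (cube m [(m-1,0)], cube m [(m-1,1)]))"

definition condB1 :: "'a \<Rightarrow> 'a \<Rightarrow> bool" where
  "condB1 lx ly \<longleftrightarrow> lx \<noteq> ly"

definition condB2 :: "nat \<Rightarrow> nat list \<times> nat list \<Rightarrow> nat list \<times> nat list \<Rightarrow> bool" where
  "condB2 l XX YY \<longleftrightarrow>
     (let (X, X') = XX; (Y, Y') = YY in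
      (\<forall>s < l div 2. {X ! s, X' ! s} \<subseteq> set Y \<or> {X ! s, X' ! s} \<subseteq> set Y') \<and>
      (\<forall>s < l div 2. {Y ! s, Y' ! s} \<subseteq> set X \<or> {Y ! s, Y' ! s} \<subseteq> set X'))"

definition condB3 :: "nat \<Rightarrow> nat list \<times> nat list \<Rightarrow> 'a::ab_group_add \<Rightarrow>
    nat list \<times> nat list \<Rightarrow> 'a \<Rightarrow> bool" where
  "condB3 l XX lx YY ly \<longleftrightarrow>
     (let (X, X') = XX; (Y, Y') = YY in
      lx = - ly \<longrightarrow>
        (\<forall>i < l div 2. \<forall>j < l div 2. \<forall>t < l div 2.
           ((X ! i, X' ! i) = (Y ! j, Y ! t) \<longrightarrow>
               i \<le> l div 4 - 1 \<and> j \<le> l div 4 - 1 \<and> t > l div 4 - 1) \<and>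
           ((X ! i, X' ! i) = (Y' ! j, Y' ! t) \<longrightarrow>
               i > l div 4 - 1 \<and> j \<le> l div 4 - 1 \<and> t > l div 4 - 1)))"

end

theory Submission
  imports Defs
begin

lemma be_bit: "bit_entry m k x = (if bit x (m-1-k) then 1 else 0)"
  unfolding bit_entry_def by (simp add: bit_iff_odd odd_iff_mod_2_eq_one even_iff_mod_2_eq_zero)

lemma be_cases: "bit_entry m k x \<noteq> 0 \<Longrightarrow> bit_entry m k x = 1"
  by (simp add: be_bit split: if_splits)

lemma shift_bits:
  fixes x :: nat
  assumes "i < m" "x < 2^m" "bit_entry m i x = 0"
  shows "x + 2^(m-1-i) < 2^m" "bit_entry m i (x + 2^(m-1-i)) = 1"
    "\<And>k. k < m \<Longrightarrow> k \<noteq> i \<Longrightarrow> bit_entry m k (x + 2^(m-1-i)) = bit_entry m k x"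
proof -
  define p where "p = m - 1 - i"
  have nb: "\<not> bit x p" using assms(3) by (simp add: be_bit p_def split: if_splits)
  have eq: "x + 2^p = set_bit p x" using nb by (simp add: set_bit_eq)
  have "take_bit m (set_bit p x) = set_bit p x"
  proof -
    have "take_bit m x = x" using assms(2) by (simp add: take_bit_nat_eq_self_iff)
    moreover have "\<not> m \<le> p" using assms(1) by (simp add: p_def)
    ultimately show ?thesis by (simp add: take_bit_set_bit_eq)
  qed
  then show "x + 2^(m-1-i) < 2^m" unfolding p_def[symmetric] eq by (simp add: take_bit_nat_eq_self_iff)
  show "bit_entry m i (x + 2^(m-1-i)) = 1" unfolding p_def[symmetric] eq
    by (simp add: be_bit bit_set_bit_iff p_def)
  fix k assume "k < m" "k \<noteq> i"
  then have "m - 1 - k \<noteq> p" using assms(1) by (simp add: p_def)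
  then show "bit_entry m k (x + 2^(m-1-i)) = bit_entry m k x" unfolding p_def[symmetric] eq
    by (simp add: be_bit bit_set_bit_iff)
qed

lemma unshift:
  fixes y :: nat
  assumes "i < m" "y < 2^m" "bit_entry m i y = 1"
  shows "\<exists>x. y = x + 2^(m-1-i) \<and> x < 2^m \<and> bit_entry m i x = 0"
proof -
  define p where "p = m - 1 - i"
  have b: "bit y p" using assms(3) by (simp add: be_bit p_def split: if_splits)
  define x where "x = unset_bit p y"
  have nb: "\<not> bit x p" by (simp add: x_def bit_unset_bit_iff)
  have "set_bit p x = y" unfolding x_def by (rule bit_eqI) (auto simp: bit_set_bit_iff bit_unset_bit_iff b)
  then have e: "y = x + 2^p" using nb by (simp add: set_bit_eq)
  show ?thesis
    apply (rule exI[of _ x]) using e nb assms(2) by (auto simp: p_def be_bit)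
qed


lemma be_cases2: "bit_entry m k x \<noteq> 1 \<Longrightarrow> bit_entry m k x = 0"
  by (simp add: be_bit split: if_splits)

lemma img:
  assumes "i < m"
  shows "(\<lambda>x. x + 2^(m-1-i)) ` {x. x<2^m \<and> bit_entry m i x = 0} = {x. x<2^m \<and> bit_entry m i x = 1}"
proof (rule set_eqI, rule iffI)
  fix y assume "y \<in> (\<lambda>x. x + 2^(m-1-i)) ` {x. x<2^m \<and> bit_entry m i x = 0}"
  then obtain x where "x<2^m" "bit_entry m i x = 0" "y = x + 2^(m-1-i)" by auto
  then show "y \<in> {x. x<2^m \<and> bit_entry m i x = 1}" using shift_bits(1,2)[OF assms] by auto
next
  fix y assume "y \<in> {x. x<2^m \<and> bit_entry m i x = 1}"
  then show "y \<in> (\<lambda>x. x + 2^(m-1-i)) ` {x. x<2^m \<and> bit_entry m i x = 0}"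
    using unshift[OF assms, of y] by auto
qed

definition cubeS :: "nat \<Rightarrow> (nat \<times> nat) set \<Rightarrow> nat list" where
  "cubeS m S = filter (\<lambda>x. \<forall>(k, b) \<in> S. bit_entry m k x = b) [0..<2 ^ m]"

lemma cube_S: "cube m cs = cubeS m (set cs)"
  unfolding cube_def cubeS_def by simp

lemma set_cubeS: "set (cubeS m S) = {x. x < 2^m \<and> (\<forall>(k, b) \<in> S. bit_entry m k x = b)}"
  unfolding cubeS_def by auto

lemma cube_shift:
  assumes "p < m" "\<forall>(k,b)\<in>S. k \<noteq> p \<and> k < m"
  shows "cubeS m (insert (p,1) S) = map (\<lambda>x. x + 2^(m-1-p)) (cubeS m (insert (p,0) S))"
proof (rule sorted_distinct_set_unique)
  show "sorted (cubeS m (insert (p,1) S))" "distinct (cubeS m (insert (p,1) S))"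
    unfolding cubeS_def by (auto intro: sorted_wrt_filter)
  have s0: "sorted (cubeS m (insert (p,0) S))" "distinct (cubeS m (insert (p,0) S))"
    unfolding cubeS_def by (auto intro: sorted_wrt_filter)
  show "sorted (map (\<lambda>x. x + 2^(m-1-p)) (cubeS m (insert (p,0) S)))"
    using s0 by (simp add: sorted_map)
  show "distinct (map (\<lambda>x. x + 2^(m-1-p)) (cubeS m (insert (p,0) S)))"
    using s0 by (simp add: distinct_map inj_on_def)
  show "set (cubeS m (insert (p,1) S)) = set (map (\<lambda>x. x + 2^(m-1-p)) (cubeS m (insert (p,0) S)))"
  proof (rule set_eqI, rule iffI)
    fix y assume "y \<in> set (cubeS m (insert (p,1) S))"
    then have y: "y < 2^m" "bit_entry m p y = 1" "\<forall>(k, b) \<in> S. bit_entry m k y = b"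
      by (auto simp: set_cubeS)
    obtain x where x: "y = x + 2^(m-1-p)" "x < 2^m" "bit_entry m p x = 0"
      using unshift[OF assms(1) y(1,2)] by blast
    have "\<forall>(k, b) \<in> S. bit_entry m k x = b"
    proof (intro ballI, clarify)
      fix k b assume kb: "(k,b) \<in> S"
      then have "k \<noteq> p" using assms(2) by auto
      moreover have "k < m" using assms(2) kb by auto
      ultimately show "bit_entry m k x = b" using shift_bits(3)[OF assms(1) x(2,3), of k] y(3) kb x(1) by auto
    qed
    then show "y \<in> set (map (\<lambda>x. x + 2^(m-1-p)) (cubeS m (insert (p,0) S)))"
      using x by (auto simp: set_cubeS)
  next
    fix y assume "y \<in> set (map (\<lambda>x. x + 2^(m-1-p)) (cubeS m (insert (p,0) S)))"
    then obtain x where x: "y = x + 2^(m-1-p)" "x < 2^m" "bit_entry m p x = 0"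
       "\<forall>(k, b) \<in> S. bit_entry m k x = b" by (auto simp: set_cubeS)
    have "\<forall>(k, b) \<in> S. bit_entry m k y = b"
    proof (intro ballI, clarify)
      fix k b assume kb: "(k,b) \<in> S"
      then have "k \<noteq> p" using assms(2) by auto
      moreover have "k < m" using assms(2) kb by auto
      ultimately show "bit_entry m k y = b" using shift_bits(3)[OF assms(1) x(2,3), of k] x(4) kb x(1) by auto
    qed
    then show "y \<in> set (cubeS m (insert (p,1) S))"
      using x shift_bits(1,2)[OF assms(1) x(2,3)] by (auto simp: set_cubeS)
  qed
qed

lemma cube_len:
  assumes "p < m" "\<forall>(k,b)\<in>S. k \<noteq> p \<and> k < m" "b \<in> {0,1}"
  shows "2 * length (cubeS m (insert (p,b) S)) = length (cubeS m S)"
proof -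
  have f0: "filter (\<lambda>x. bit_entry m p x = 0) (cubeS m S) = cubeS m (insert (p,0) S)"
    unfolding cubeS_def filter_filter by (rule filter_cong) auto
  have f1: "filter (\<lambda>x. \<not> bit_entry m p x = 0) (cubeS m S) = cubeS m (insert (p,1) S)"
    unfolding cubeS_def filter_filter by (rule filter_cong) (auto simp: be_bit split: if_splits)
  have "length (cubeS m (insert (p,0) S)) + length (cubeS m (insert (p,1) S)) = length (cubeS m S)"
    using sum_length_filter_compl[of "\<lambda>x. bit_entry m p x = 0" "cubeS m S"] f0 f1 by simp
  moreover have "length (cubeS m (insert (p,1) S)) = length (cubeS m (insert (p,0) S))"
    using cube_shift[OF assms(1,2)] by simp
  ultimately show ?thesis using assms(3) by auto
qed

lemma len_empty: "length (cubeS m {}) = 2^m"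
  unfolding cubeS_def by simp

lemma len2:
  assumes "a < m" "c < m" "a \<noteq> c" "b0 \<in> {0,1}" "b1 \<in> {0,1}"
  shows "length (cubeS m {(a,b0),(c,b1)}) = 2^m div 4"
proof -
  have "2 * length (cubeS m (insert (a,b0) {(c,b1)})) = length (cubeS m {(c,b1)})"
    by (rule cube_len) (use assms in auto)
  moreover have "2 * length (cubeS m (insert (c,b1) {})) = length (cubeS m {})"
    by (rule cube_len) (use assms in auto)
  ultimately show ?thesis using len_empty[of m] by simp
qed

lemma len1:
  assumes "a < m" "b0 \<in> {0,1}"
  shows "2 * length (cubeS m {(a,b0)}) = 2^m"
proof -
  have "2 * length (cubeS m (insert (a,b0) {})) = length (cubeS m {})"
    by (rule cube_len) (use assms in auto)
  then show ?thesis using len_empty[of m] by simp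
qed

lemma pow_div4: "2 \<le> m \<Longrightarrow> (2::nat)^m div 4 + 2^m div 4 = 2^m div 2"
proof -
  assume "2 \<le> m"
  then obtain k where "m = k + 2" by (metis add.commute le_add_diff_inverse)
  then show ?thesis by simp
qed

lemma match_struct:
  assumes "i < m" "2 \<le> m"
  shows "snd (matching m i) = map (\<lambda>x. x + 2^(m-1-i)) (fst (matching m i))
    \<and> set (fst (matching m i)) = {x. x < 2^m \<and> bit_entry m i x = 0}
    \<and> set (snd (matching m i)) = {x. x < 2^m \<and> bit_entry m i x = 1}
    \<and> length (fst (matching m i)) = 2^m div 2"
proof (cases "i < 2 * (m div 2)")
  case True
  show ?thesis
  proof (cases "even i")
    case ev: True
    have im: "i + 1 < m" using True ev by presburger
    have fst: "fst (matching m i) = cubeS m (insert (i,0) {(i+1,0)}) @ cubeS m (insert (i,0) {(i+1,1)})"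
      using True ev by (simp add: matching_def cube_S)
    have snd: "snd (matching m i) = cubeS m (insert (i,1) {(i+1,0)}) @ cubeS m (insert (i,1) {(i+1,1)})"
      using True ev by (simp add: matching_def cube_S)
    have sh: "\<And>b. cubeS m (insert (i,1) {(i+1,b)}) = map (\<lambda>x. x + 2^(m-1-i)) (cubeS m (insert (i,0) {(i+1,b)}))"
      by (rule cube_shift) (use im in auto)
    have l: "\<And>b. b \<in> {0,1} \<Longrightarrow> length (cubeS m (insert (i,0) {(i+1,b)})) = 2^m div 4"
      by (rule len2) (use im in auto)
    show ?thesis
    proof (intro conjI)
      show x': "snd (matching m i) = map (\<lambda>x. x + 2^(m-1-i)) (fst (matching m i))"
        unfolding fst snd sh by simp
      show sx: "set (fst (matching m i)) = {x. x < 2^m \<and> bit_entry m i x = 0}"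
        unfolding fst by (auto simp: set_cubeS be_bit split: if_splits)
      show "set (snd (matching m i)) = {x. x < 2^m \<and> bit_entry m i x = 1}"
        unfolding x' set_map sx by (rule img[OF assms(1)])
      show "length (fst (matching m i)) = 2^m div 2"
        unfolding fst using l[of 0] l[of 1] pow_div4[OF assms(2)] by simp
    qed
  next
    case od: False
    have im: "i - 1 < i" "i < m" using od assms(1) by presburger+
    have fst: "fst (matching m i) = cubeS m (insert (i,0) {(i-1,0)}) @ cubeS m (insert (i,0) {(i-1,1)})"
      using True od by (simp add: matching_def cube_S insert_commute)
    have snd: "snd (matching m i) = cubeS m (insert (i,1) {(i-1,0)}) @ cubeS m (insert (i,1) {(i-1,1)})"
      using True od by (simp add: matching_def cube_S insert_commute)
    have sh: "\<And>b. cubeS m (insert (i,1) {(i-1,b)}) = map (\<lambda>x. x + 2^(m-1-i)) (cubeS m (insert (i,0) {(i-1,b)}))"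
      by (rule cube_shift) (use im in auto)
    have l: "\<And>b. b \<in> {0,1} \<Longrightarrow> length (cubeS m (insert (i,0) {(i-1,b)})) = 2^m div 4"
      by (rule len2) (use im in auto)
    show ?thesis
    proof (intro conjI)
      show x': "snd (matching m i) = map (\<lambda>x. x + 2^(m-1-i)) (fst (matching m i))"
        unfolding fst snd sh by simp
      show sx: "set (fst (matching m i)) = {x. x < 2^m \<and> bit_entry m i x = 0}"
        unfolding fst by (auto simp: set_cubeS be_bit split: if_splits)
      show "set (snd (matching m i)) = {x. x < 2^m \<and> bit_entry m i x = 1}"
        unfolding x' set_map sx by (rule img[OF assms(1)])
      show "length (fst (matching m i)) = 2^m div 2"
        unfolding fst using l[of 0] l[of 1] pow_div4[OF assms(2)] by simp
    qed
  qed
next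
  case False
  then have ie: "i = m - 1" using assms(1) by presburger
  have fst: "fst (matching m i) = cubeS m (insert (i,0) {})"
    using False ie by (simp add: matching_def cube_S)
  have snd: "snd (matching m i) = cubeS m (insert (i,1) {})"
    using False ie by (simp add: matching_def cube_S)
  have sh: "cubeS m (insert (i,1) {}) = map (\<lambda>x. x + 2^(m-1-i)) (cubeS m (insert (i,0) {}))"
    by (rule cube_shift) (use assms in auto)
  have l: "2 * length (cubeS m {(i,0)}) = 2^m" by (rule len1) (use assms in auto)
  show ?thesis
  proof (intro conjI)
    show x': "snd (matching m i) = map (\<lambda>x. x + 2^(m-1-i)) (fst (matching m i))"
      unfolding fst snd sh by simp
    show sx: "set (fst (matching m i)) = {x. x < 2^m \<and> bit_entry m i x = 0}"
      unfolding fst by (auto simp: set_cubeS)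
    show "set (snd (matching m i)) = {x. x < 2^m \<and> bit_entry m i x = 1}"
      unfolding x' set_map sx by (rule img[OF assms(1)])
    show "length (fst (matching m i)) = 2^m div 2"
      unfolding fst using l by simp
  qed
qed

lemma match_quarter:
  assumes "i < 2 * (m div 2)"
  shows "\<exists>A B. fst (matching m i) = A @ B \<and> length A = 2^m div 4 \<and> length B = 2^m div 4
     \<and> (\<forall>x\<in>set A. bit_entry m (if even i then i+1 else i-1) x = 0)
     \<and> (\<forall>x\<in>set B. bit_entry m (if even i then i+1 else i-1) x = 1)"
proof (cases "even i")
  case ev: True
  have im: "i + 1 < m" using assms ev by presburger
  have fst: "fst (matching m i) = cubeS m (insert (i,0) {(i+1,0)}) @ cubeS m (insert (i,0) {(i+1,1)})"
    using assms ev by (simp add: matching_def cube_S)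
  have l: "\<And>b. b \<in> {0,1} \<Longrightarrow> length (cubeS m (insert (i,0) {(i+1,b)})) = 2^m div 4"
    by (rule len2) (use im in auto)
  show ?thesis unfolding fst using l[of 0] l[of 1] ev by (intro exI[of _ "cubeS m (insert (i,0) {(i+1,0)})"] exI[of _ "cubeS m (insert (i,0) {(i+1,1)})"]) (auto simp: set_cubeS)
next
  case od: False
  have im: "i - 1 < i" "i < m" using od assms by presburger+
  have fst: "fst (matching m i) = cubeS m (insert (i,0) {(i-1,0)}) @ cubeS m (insert (i,0) {(i-1,1)})"
    using assms od by (simp add: matching_def cube_S insert_commute)
  have l: "\<And>b. b \<in> {0,1} \<Longrightarrow> length (cubeS m (insert (i,0) {(i-1,b)})) = 2^m div 4"
    by (rule len2) (use im in auto)
  show ?thesis unfolding fst using l[of 0] l[of 1] od by (intro exI[of _ "cubeS m (insert (i,0) {(i-1,0)})"] exI[of _ "cubeS m (insert (i,0) {(i-1,1)})"]) (auto simp: set_cubeS)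
qed

lemma pos:
  assumes "k < 2 * (m div 2)" "2 \<le> m" "s < 2^m div 2"
  shows "bit_entry m (if even k then k+1 else k-1) (fst (matching m k) ! s) = (if s < 2^m div 4 then 0 else 1)"
    "bit_entry m (if even k then k+1 else k-1) (snd (matching m k) ! s) = (if s < 2^m div 4 then 0 else 1)"
proof -
  have km: "k < m" using assms(1) by linarith
  obtain A B where AB: "fst (matching m k) = A @ B" "length A = 2^m div 4" "length B = 2^m div 4"
     "\<forall>x\<in>set A. bit_entry m (if even k then k+1 else k-1) x = 0"
     "\<forall>x\<in>set B. bit_entry m (if even k then k+1 else k-1) x = 1"
    using match_quarter[OF assms(1)] by blast
  have ms: "snd (matching m k) = map (\<lambda>x. x + 2^(m-1-k)) (fst (matching m k))"
    "set (fst (matching m k)) = {x. x < 2^m \<and> bit_entry m k x = 0}"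
    "length (fst (matching m k)) = 2^m div 2"
    using match_struct[OF km assms(2)] by auto
  show 1: "bit_entry m (if even k then k+1 else k-1) (fst (matching m k) ! s) = (if s < 2^m div 4 then 0 else 1)"
  proof (cases "s < 2^m div 4")
    case True then show ?thesis using AB by (simp add: nth_append)
  next
    case False
    then have "s - 2^m div 4 < length B" using AB(3) assms(3) pow_div4[OF assms(2)] by linarith
    then show ?thesis using AB False by (simp add: nth_append)
  qed
  have sl: "s < length (fst (matching m k))" using ms(3) assms(3) by simp
  then have xin: "fst (matching m k) ! s \<in> set (fst (matching m k))" by simp
  have pk: "(if even k then k+1 else k-1) < m" "(if even k then k+1 else k-1) \<noteq> k"
    using assms(1) by (cases "even k"; presburger)+
  show "bit_entry m (if even k then k+1 else k-1) (snd (matching m k) ! s) = (if s < 2^m div 4 then 0 else 1)"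
    unfolding ms(1) nth_map[OF sl] using shift_bits(3)[OF km _ _ pk] xin ms(2) 1 by auto
qed

lemma B2half:
  assumes "i < m" "j < m" "i \<noteq> j" "2 \<le> m"
  shows "\<forall>s < 2^m div 2. {fst (matching m i) ! s, snd (matching m i) ! s} \<subseteq> set (fst (matching m j))
      \<or> {fst (matching m i) ! s, snd (matching m i) ! s} \<subseteq> set (snd (matching m j))"
proof (intro allI impI)
  fix s :: nat assume s: "s < 2^m div 2"
  have mi: "snd (matching m i) = map (\<lambda>x. x + 2^(m-1-i)) (fst (matching m i))"
    "set (fst (matching m i)) = {x. x < 2^m \<and> bit_entry m i x = 0}"
    "length (fst (matching m i)) = 2^m div 2"
    using match_struct[OF assms(1,4)] by blast+
  have mj: "set (fst (matching m j)) = {x. x < 2^m \<and> bit_entry m j x = 0}"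
    "set (snd (matching m j)) = {x. x < 2^m \<and> bit_entry m j x = 1}"
    using match_struct[OF assms(2,4)] by blast+
  have sl: "s < length (fst (matching m i))" using mi(3) s by simp
  define x where "x = fst (matching m i) ! s"
  have "x \<in> set (fst (matching m i))" unfolding x_def using sl by (rule nth_mem)
  then have x: "x < 2^m" "bit_entry m i x = 0" unfolding mi(2) by simp_all
  have x': "snd (matching m i) ! s = x + 2^(m-1-i)" unfolding mi(1) nth_map[OF sl] x_def ..
  have b: "bit_entry m j (x + 2^(m-1-i)) = bit_entry m j x" using shift_bits(3)[OF assms(1) x assms(2)] assms(3) by auto
  have lt: "x + 2^(m-1-i) < 2^m" using shift_bits(1)[OF assms(1) x] .
  show "{fst (matching m i) ! s, snd (matching m i) ! s} \<subseteq> set (fst (matching m j))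
      \<or> {fst (matching m i) ! s, snd (matching m i) ! s} \<subseteq> set (snd (matching m j))"
  proof (cases "bit_entry m j x = 0")
    case True
    then have "x \<in> set (fst (matching m j))" "x + 2^(m-1-i) \<in> set (fst (matching m j))"
      using mj(1) b lt x(1) by simp_all
    then show ?thesis unfolding x' x_def[symmetric] by blast
  next
    case False
    then have "bit_entry m j x = 1" by (rule be_cases)
    then have "x \<in> set (snd (matching m j))" "x + 2^(m-1-i) \<in> set (snd (matching m j))"
      using mj(2) b lt x(1) by simp_all
    then show ?thesis unfolding x' x_def[symmetric] by blast
  qed
qed

lemma partner_lam:
  fixes lam :: "nat \<Rightarrow> 'a::ab_group_add"
  assumes "i < m" "j < m" "i \<noteq> j" "lam i = - lam j"
    and distinct: "\<forall>i < m. \<forall>j < m. i \<noteq> j \<longrightarrow> lam i \<noteq> lam j"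
    and neg: "\<forall>t < m div 2. lam (2 * t) = - lam (2 * t + 1)"
  shows "i < 2 * (m div 2) \<and> j < 2 * (m div 2) \<and> j = (if even i then i+1 else i-1)"
proof -
  have P: "a < 2 * (m div 2) \<Longrightarrow> lam (if even a then a+1 else a-1) = - lam a
      \<and> (if even a then a+1 else a-1) < 2 * (m div 2) \<and> (if even a then a+1 else a-1) \<noteq> a
      \<and> (if even (if even a then a+1 else a-1) then (if even a then a+1 else a-1)+1 else (if even a then a+1 else a-1)-1) = a" for a
  proof -
    assume a: "a < 2 * (m div 2)"
    have t: "a div 2 < m div 2" using a by linarith
    have l: "lam (2 * (a div 2)) = - lam (2 * (a div 2) + 1)" using neg t by blast
    show ?thesis
    proof (cases "even a")
      case True
      then have e: "a = 2 * (a div 2)" by simp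
      have "lam (a+1) = - lam a" using l e by (metis minus_minus)
      moreover have "a + 1 < 2 * (m div 2)" using a True by presburger
      ultimately show ?thesis using True by simp
    next
      case False
      then have e: "a = 2 * (a div 2) + 1" by simp
      have "lam (a-1) = - lam a" using l e by (metis diff_add_inverse2)
      moreover have "a - 1 < 2 * (m div 2)" using a by linarith
      moreover have "even (a - 1)" "a - 1 + 1 = a" "a - 1 \<noteq> a" using False by presburger+
      ultimately show ?thesis using False by simp
    qed
  qed
  show ?thesis
  proof (cases "j < 2 * (m div 2)")
    case True
    note Pj = P[OF True]
    have "lam (if even j then j+1 else j-1) = lam i" using Pj assms(4) by simp
    moreover have "(if even j then j+1 else j-1) < m" using Pj by linarith
    ultimately have "i = (if even j then j+1 else j-1)" using distinct assms(1) by metis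
    then show ?thesis using Pj True by simp
  next
    case False
    then have i: "i < 2 * (m div 2)" using assms(1,2,3) by presburger
    note Pi = P[OF i]
    have "lam (if even i then i+1 else i-1) = lam j" using Pi assms(4) by simp
    moreover have "(if even i then i+1 else i-1) < m" using Pi by linarith
    ultimately have "j = (if even i then i+1 else i-1)" using distinct assms(2) by metis
    then show ?thesis using Pi False by simp
  qed
qed

lemma B3pair:
  assumes ir: "i < 2*(m div 2)" and m2: "2 \<le> m" and jd: "j = (if even i then i+1 else i-1)"
  shows "\<forall>a < (2::nat)^m div 2. \<forall>b < (2::nat)^m div 2. \<forall>c < (2::nat)^m div 2.
   ((fst (matching m i) ! a, snd (matching m i) ! a) = (fst (matching m j) ! b, fst (matching m j) ! c) \<longrightarrow>
       a \<le> 2^m div 4 - 1 \<and> b \<le> 2^m div 4 - 1 \<and> c > 2^m div 4 - 1) \<and>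
   ((fst (matching m i) ! a, snd (matching m i) ! a) = (snd (matching m j) ! b, snd (matching m j) ! c) \<longrightarrow>
       a > 2^m div 4 - 1 \<and> b \<le> 2^m div 4 - 1 \<and> c > 2^m div 4 - 1)"
proof (intro allI impI conjI)
  define Q :: nat where "Q = 2^m div 4"
  have Q1: "Q \<ge> 1"
  proof -
    obtain k where "m = k + 2" using m2 by (metis add.commute le_add_diff_inverse)
    then show ?thesis unfolding Q_def by simp
  qed
  have jr: "j < 2*(m div 2) \<and> (if even j then j+1 else j-1) = i \<and> i < m \<and> j < m \<and> i \<noteq> j"
  proof (cases "even i")
    case True
    then have "j = i + 1" "i + 1 < 2*(m div 2)" using jd ir by presburger+
    then show ?thesis using True by auto
  next
    case False
    then have "j = i - 1" "i \<ge> 1" "even (i - 1)" using jd by presburger+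
    then show ?thesis using False ir by auto
  qed
  then have jr: "j < 2*(m div 2)" "(if even j then j+1 else j-1) = i" "i < m" "j < m" "i \<noteq> j" by auto
  note pi = pos[OF ir m2] and pj = pos[OF jr(1) m2]
  have mi: "set (fst (matching m i)) = {x. x < 2^m \<and> bit_entry m i x = 0}"
    "set (snd (matching m i)) = {x. x < 2^m \<and> bit_entry m i x = 1}"
    "length (fst (matching m i)) = 2^m div 2"
    using match_struct[OF jr(3) m2] by blast+
  have mi4: "length (snd (matching m i)) = 2^m div 2"
    using match_struct[OF jr(3) m2] by simp
  have mj: "set (fst (matching m j)) = {x. x < 2^m \<and> bit_entry m j x = 0}"
    "set (snd (matching m j)) = {x. x < 2^m \<and> bit_entry m j x = 1}"
    "length (fst (matching m j)) = 2^m div 2"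
    using match_struct[OF jr(4) m2] by blast+
  have mj4: "length (snd (matching m j)) = 2^m div 2"
    using match_struct[OF jr(4) m2] by simp
  fix a b c :: nat assume a: "a < 2^m div 2" and b: "b < 2^m div 2" and c: "c < 2^m div 2"
  have "fst (matching m i) ! a \<in> set (fst (matching m i))" by (rule nth_mem) (simp add: mi(3) a)
  moreover have "snd (matching m i) ! a \<in> set (snd (matching m i))" by (rule nth_mem) (simp add: mi4 a)
  ultimately have xi: "bit_entry m i (fst (matching m i) ! a) = 0" "bit_entry m i (snd (matching m i) ! a) = 1"
    unfolding mi(1,2) by simp_all
  have pia: "bit_entry m j (fst (matching m i) ! a) = (if a < Q then 0 else 1)"
    "bit_entry m j (snd (matching m i) ! a) = (if a < Q then 0 else 1)"
    using pi[OF a] jd unfolding Q_def by auto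
  have pjb: "bit_entry m i (fst (matching m j) ! b) = (if b < Q then 0 else 1)"
    "bit_entry m i (snd (matching m j) ! b) = (if b < Q then 0 else 1)"
    using pj[OF b] jr(2) unfolding Q_def by auto
  have pjc: "bit_entry m i (fst (matching m j) ! c) = (if c < Q then 0 else 1)"
    "bit_entry m i (snd (matching m j) ! c) = (if c < Q then 0 else 1)"
    using pj[OF c] jr(2) unfolding Q_def by auto
  have "fst (matching m j) ! b \<in> set (fst (matching m j))" by (rule nth_mem) (simp add: mj(3) b)
  moreover have "snd (matching m j) ! b \<in> set (snd (matching m j))" by (rule nth_mem) (simp add: mj4 b)
  ultimately have yb: "bit_entry m j (fst (matching m j) ! b) = 0" "bit_entry m j (snd (matching m j) ! b) = 1"
    unfolding mj(1,2) by simp_all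
  {
    assume e: "(fst (matching m i) ! a, snd (matching m i) ! a) = (fst (matching m j) ! b, fst (matching m j) ! c)"
    then have e1: "fst (matching m i) ! a = fst (matching m j) ! b" and e2: "snd (matching m i) ! a = fst (matching m j) ! c" by simp_all
    have "a < Q" using pia(1) yb(1) e1 by (cases "a < Q") simp_all
    moreover have "b < Q" using pjb(1) xi(1) e1 by (cases "b < Q") simp_all
    moreover have "\<not> c < Q" using pjc(1) xi(2) e2 by (cases "c < Q") simp_all
    ultimately show "a \<le> 2^m div 4 - 1" "b \<le> 2^m div 4 - 1" "c > 2^m div 4 - 1"
      using Q1 unfolding Q_def by linarith+
  next
    assume e: "(fst (matching m i) ! a, snd (matching m i) ! a) = (snd (matching m j) ! b, snd (matching m j) ! c)"
    then have e1: "fst (matching m i) ! a = snd (matching m j) ! b" and e2: "snd (matching m i) ! a = snd (matching m j) ! c" by simp_all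
    have "\<not> a < Q" using pia(1) yb(2) e1 by (cases "a < Q") simp_all
    moreover have "b < Q" using pjb(2) xi(1) e1 by (cases "b < Q") simp_all
    moreover have "\<not> c < Q" using pjc(2) xi(2) e2 by (cases "c < Q") simp_all
    ultimately show "a > 2^m div 4 - 1" "b \<le> 2^m div 4 - 1" "c > 2^m div 4 - 1"
      using Q1 unfolding Q_def by linarith+
  }
qed

theorem lemma4p10:
  fixes lam :: "nat \<Rightarrow> 'a::{field, finite}" and m :: nat
  assumes q_odd_prime_power:
      "\<exists>p k. prime p \<and> odd p \<and> k \<ge> 1 \<and> CARD('a) = p ^ k"
    and q_ge: "CARD('a) \<ge> m + 1"
    and m_ge: "m \<ge> 2"
    and nonzero: "\<forall>i < m. lam i \<noteq> 0"
    and distinct: "\<forall>i < m. \<forall>j < m. i \<noteq> j \<longrightarrow> lam i \<noteq> lam j"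
    and neg: "\<forall>t < m div 2. lam (2 * t) = - lam (2 * t + 1)"
  shows "\<forall>i < m. \<forall>j < m. i \<noteq> j \<longrightarrow>
           condB1 (lam i) (lam j) \<and>
           condB2 (2 ^ m) (matching m i) (matching m j) \<and>
           condB3 (2 ^ m) (matching m i) (lam i) (matching m j) (lam j)"
proof (intro allI impI conjI)
  fix i j assume ij: "i < m" "j < m" "i \<noteq> j"
  show "condB1 (lam i) (lam j)" unfolding condB1_def using distinct ij by blast
  note h1 = B2half[OF ij m_ge] and h2 = B2half[OF ij(2,1) _ m_ge]
  show "condB2 (2 ^ m) (matching m i) (matching m j)"
    unfolding condB2_def Let_def split_beta using h1 h2 ij(3) by auto
  show "condB3 (2 ^ m) (matching m i) (lam i) (matching m j) (lam j)"
    unfolding condB3_def Let_def split_beta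
  proof (intro impI)
    assume "lam i = - lam j"
    then have p: "i < 2 * (m div 2) \<and> j < 2 * (m div 2) \<and> j = (if even i then i+1 else i-1)"
      using partner_lam[OF ij _ distinct neg] by blast
    show "\<forall>a < (2::nat)^m div 2. \<forall>b < (2::nat)^m div 2. \<forall>c < (2::nat)^m div 2.
   ((fst (matching m i) ! a, snd (matching m i) ! a) = (fst (matching m j) ! b, fst (matching m j) ! c) \<longrightarrow>
       a \<le> 2^m div 4 - 1 \<and> b \<le> 2^m div 4 - 1 \<and> c > 2^m div 4 - 1) \<and>
   ((fst (matching m i) ! a, snd (matching m i) ! a) = (snd (matching m j) ! b, snd (matching m j) ! c) \<longrightarrow>
       a > 2^m div 4 - 1 \<and> b \<le> 2^m div 4 - 1 \<and> c > 2^m div 4 - 1)"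
      using B3pair[of i m j] p m_ge by blast
  qed
qed

end
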